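(* Suppose $\mathfrak g(A)$ is integrable, and $A$ is elemental and indecomposable with $n\ge2$. Then, after multiplying rows of $A$ by suitable nonzero scalars, $A$ satisfies: (C1) $a_{ii}\in\{0,2\}$ for all $i\in I$; (C2) if $a_{ii}=0$ then $p(i)=1$; (C3) if $a_{ii}=2$ then $a_{ij}\in 2^{p(i)}\mathbb Z_{\le0}$ for all $j\neq i$; (C4) if $a_{ij}=0$ and $a_{ji}\ne0$ then $a_{ii}=0$.
   Context: Let $I=\{1,\dots,n\}$, let $A=(a_{ij})_{i,j\in I}$ be a complex $n\times n$ matrix and $p:I\to\mathbb Z_2$ a parity function. Fix a complex vector space $\mathfrak h$ of dimension $n+\operatorname{corank}(A)$, linearly independent $\alpha_1,\dots,\alpha_n\in\mathfrak h^*$ and $h_1,\dots,h_n\in\mathfrak h$ with $\alpha_j(h_i)=a_{ij}$. Let $\bar{\mathfrak g}(A)$ be the Lie superalgebra generated by $\mathfrak h$ (even, abelian) and elements $X_i,Y_i$ ($i\in I$) of parity $p(i)$ subject to $[h,X_i]=\alpha_i(h)X_i$, $[h,Y_i]=-\alpha_i(h)Y_i$, $[X_i,Y_j]=\delta_{ij}h_i$. The contragredient Lie superalgebra $\mathfrak g(A)$ is the quotient of $\bar{\mathfrak g}(A)$ by the unique maximal ideal meeting $\mathfrak h$ trivially; we keep writing $X_i,Y_i,h_i$ for the images. Multiplying rows of $A$ by nonzero scalars does not change $\mathfrak g(A)$ up to isomorphism. $\mathfrak g(A)$ is integrable if $\operatorname{ad}X_i$ is locally nilpotent on $\mathfrak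 g(A)$ for every $i\in I$. $A$ is elemental if it has no zero row; indecomposable if $I$ is not a disjoint union of nonempty $J,K$ with $a_{jk}=a_{kj}=0$ for $j\in J,k\in K$. *)

theory Defs
  imports "HOL-Analysis.Analysis"
begin

text \<open>Z2-grading: parity is encoded as bool (True = odd). grade L0 L1 b is the homogeneous
  component of parity b.\<close>

definition grade :: "'v set \<Rightarrow> 'v set \<Rightarrow> bool \<Rightarrow> 'v set" where
  "grade L0 L1 b = (if b then L1 else L0)"

definition ssign :: "bool \<Rightarrow> bool \<Rightarrow> complex" where
  "ssign a b = (if a \<and> b then -1 else 1)"

text \<open>A complex Lie superalgebra whose underlying space is the whole type 'v, with
  scalar multiplication sc, bracket br and even/odd parts L0, L1.\<close>

definition lie_superalgebra ::
  "(complex \<Rightarrow> 'v::ab_group_add \<Rightarrow> 'v) \<Rightarrow> ('v \<Rightarrow> 'v \<Rightarrow> 'v) \<Rightarrow> 'v set \<Rightarrow> 'v set \<Rightarrow> bool" where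
  "lie_superalgebra sc br L0 L1 \<longleftrightarrow>
     vector_space sc \<and> module.subspace sc L0 \<and> module.subspace sc L1 \<and>
     (\<forall>v. \<exists>!ab. fst ab \<in> L0 \<and> snd ab \<in> L1 \<and> v = fst ab + snd ab) \<and>
     (\<forall>x y z. br (x + y) z = br x z + br y z) \<and>
     (\<forall>x y z. br x (y + z) = br x y + br x z) \<and>
     (\<forall>c x y. br (sc c x) y = sc c (br x y)) \<and>
     (\<forall>c x y. br x (sc c y) = sc c (br x y)) \<and>
     (\<forall>a b x y. x \<in> grade L0 L1 a \<longrightarrow> y \<in> grade L0 L1 b \<longrightarrow>
        br x y \<in> grade L0 L1 (a \<noteq> b)) \<and>
     (\<forall>a b x y. x \<in> grade L0 L1 a \<longrightarrow> y \<in> grade L0 L1 b \<longrightarrow>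
        br x y = - sc (ssign a b) (br y x)) \<and>
     (\<forall>a b x y z. x \<in> grade L0 L1 a \<longrightarrow> y \<in> grade L0 L1 b \<longrightarrow>
        br x (br y z) = br (br x y) z + sc (ssign a b) (br y (br x z)))"

definition corank :: "complex^'n^'n \<Rightarrow> nat" where
  "corank A = CARD('n) - rank A"

text \<open>The data (sc, br, L0, L1, H, \<alpha>, hh, X, Y) realise the contragredient Lie superalgebra
  g(A) for the matrix A (indexed by the finite type 'n) and parity p:
  H is the (embedded) Cartan subalgebra h, \<alpha> j are the simple roots (linear on H),
  hh i are the coroots h_i, X i, Y i the generators.  The algebra is generated by
  H and the X i, Y i subject to the defining relations (so it is a quotient of
  the free algebra bar g(A) in which h embeds), and it has no nonzero ideal meeting
  H trivially (so the kernel is the maximal ideal meeting h trivially).\<close>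

definition contragredient ::
  "complex^'n^'n \<Rightarrow> ('n \<Rightarrow> bool) \<Rightarrow> (complex \<Rightarrow> 'v::ab_group_add \<Rightarrow> 'v) \<Rightarrow> ('v \<Rightarrow> 'v \<Rightarrow> 'v)
   \<Rightarrow> 'v set \<Rightarrow> 'v set \<Rightarrow> 'v set \<Rightarrow> ('n \<Rightarrow> 'v \<Rightarrow> complex)
   \<Rightarrow> ('n \<Rightarrow> 'v) \<Rightarrow> ('n \<Rightarrow> 'v) \<Rightarrow> ('n \<Rightarrow> 'v) \<Rightarrow> bool" where
  "contragredient A p sc br L0 L1 H \<alpha> hh X Y \<longleftrightarrow>
     lie_superalgebra sc br L0 L1 \<and>
     module.subspace sc H \<and> H \<subseteq> L0 \<and>
     vector_space.dim sc H = CARD('n) + corank A \<and>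
     (\<forall>h\<in>H. \<forall>h'\<in>H. br h h' = 0) \<and>
     (\<forall>j. \<forall>h\<in>H. \<forall>h'\<in>H. \<alpha> j (h + h') = \<alpha> j h + \<alpha> j h') \<and>
     (\<forall>j c. \<forall>h\<in>H. \<alpha> j (sc c h) = c * \<alpha> j h) \<and>
     (\<forall>c :: 'n \<Rightarrow> complex. (\<forall>h\<in>H. (\<Sum>j\<in>UNIV. c j * \<alpha> j h) = 0) \<longrightarrow> (\<forall>j. c j = 0)) \<and>
     (\<forall>i. hh i \<in> H) \<and>
     (\<forall>i j. \<alpha> j (hh i) = A $ i $ j) \<and>
     (\<forall>i. X i \<in> grade L0 L1 (p i) \<and> Y i \<in> grade L0 L1 (p i)) \<and>
     (\<forall>i. \<forall>h\<in>H. br h (X i) = sc (\<alpha> i h) (X i)) \<and>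
     (\<forall>i. \<forall>h\<in>H. br h (Y i) = sc (- \<alpha> i h) (Y i)) \<and>
     (\<forall>i j. br (X i) (Y j) = (if i = j then hh i else 0)) \<and>
     (\<forall>S. module.subspace sc S \<and> (\<forall>x\<in>S. \<forall>y\<in>S. br x y \<in> S) \<and> H \<subseteq> S \<and>
          range X \<subseteq> S \<and> range Y \<subseteq> S \<longrightarrow> S = UNIV) \<and>
     (\<forall>J. module.subspace sc J \<and> (\<forall>x. \<forall>y\<in>J. br x y \<in> J \<and> br y x \<in> J) \<and>
          J \<inter> H = {0} \<longrightarrow> J = {0})"

definition lie_integrable :: "('v::ab_group_add \<Rightarrow> 'v \<Rightarrow> 'v) \<Rightarrow> ('n \<Rightarrow> 'v) \<Rightarrow> bool" where
  "lie_integrable br X \<longleftrightarrow> (\<forall>i v. \<exists>m. ((br (X i)) ^^ m) v = 0)"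

definition elemental :: "complex^'n^'n \<Rightarrow> bool" where
  "elemental A \<longleftrightarrow> (\<forall>i. \<exists>j. A $ i $ j \<noteq> 0)"

definition indecomposable :: "complex^'n^'n \<Rightarrow> bool" where
  "indecomposable A \<longleftrightarrow>
     \<not> (\<exists>J K. J \<noteq> {} \<and> K \<noteq> {} \<and> J \<inter> K = {} \<and> J \<union> K = UNIV \<and>
            (\<forall>j\<in>J. \<forall>k\<in>K. A $ j $ k = 0 \<and> A $ k $ j = 0))"

definition row_scale :: "('n \<Rightarrow> complex) \<Rightarrow> complex^'n^'n \<Rightarrow> complex^'n^'n" where
  "row_scale c A = (\<chi> i j. c i * A $ i $ j)"

text \<open>Conditions (C1)-(C4); p i = True means p(i) = 1 (odd).\<close>

definition conditions_C :: "complex^'n^'n \<Rightarrow> ('n \<Rightarrow> bool) \<Rightarrow> bool" where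
  "conditions_C A p \<longleftrightarrow>
     (\<forall>i. A $ i $ i = 0 \<or> A $ i $ i = 2) \<and>
     (\<forall>i. A $ i $ i = 0 \<longrightarrow> p i) \<and>
     (\<forall>i j. A $ i $ i = 2 \<longrightarrow> j \<noteq> i \<longrightarrow>
        (\<exists>k::int. k \<le> 0 \<and> A $ i $ j = (if p i then 2 else 1) * of_int k)) \<and>
     (\<forall>i j. A $ i $ j = 0 \<longrightarrow> A $ j $ i \<noteq> 0 \<longrightarrow> A $ i $ i = 0)"

end

theory Submission
  imports Defs
begin

fun cf :: "complex \<Rightarrow> complex \<Rightarrow> complex \<Rightarrow> nat \<Rightarrow> complex" where
  "cf s a b 0 = 0"
| "cf s a b (Suc m) = s * (cf s a b m - (b + of_nat m * a))"

lemma cf_even: "2 * cf 1 a b m = - (2 * of_nat m * b + of_nat m * (of_nat m - 1) * a)"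
  by (induction m) (simp_all add: algebra_simps)

lemma cf_SS: "cf (-1) a b (Suc (Suc m)) = cf (-1) a b m + a"
  by (simp add: algebra_simps)

lemma cf_1: "cf (-1) a b (Suc m) = b + of_nat m * a - cf (-1) a b m"
  by (simp add: algebra_simps)

lemma cf_ev: "cf (-1) a b (2*k) = of_nat k * a"
proof (induction k)
  case 0 then show ?case by simp
next
  case (Suc k)
  have "2 * Suc k = Suc (Suc (2*k))" by simp
  then show ?case using Suc by (simp only: cf_SS) (simp add: algebra_simps)
qed

lemma cf_odd: "cf (-1) a b (2*k) = of_nat k * a \<and> cf (-1) a b (2*k+1) = b + of_nat k * a"
proof
  show "cf (-1) a b (2*k) = of_nat k * a" by (rule cf_ev)
  have "cf (-1) a b (Suc (2*k)) = b + of_nat (2*k) * a - of_nat k * a" by (simp only: cf_1 cf_ev)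
  then show "cf (-1) a b (2*k+1) = b + of_nat k * a" by (simp add: algebra_simps)
qed

declare cf.simps[simp del]

lemma ssign_cases: "ssign a b = 1 \<or> ssign a b = -1"
  by (simp add: ssign_def)

locale cg =
  fixes A :: "complex^'n^'n" and p :: "'n \<Rightarrow> bool"
    and sc :: "complex \<Rightarrow> 'v::ab_group_add \<Rightarrow> 'v" and br :: "'v \<Rightarrow> 'v \<Rightarrow> 'v"
    and L0 L1 H :: "'v set" and \<alpha> :: "'n \<Rightarrow> 'v \<Rightarrow> complex"
    and hh X Y :: "'n \<Rightarrow> 'v"
  assumes C: "contragredient A p sc br L0 L1 H \<alpha> hh X Y"
    and elem: "elemental A"
begin

lemma LS: "lie_superalgebra sc br L0 L1" using C unfolding contragredient_def by blast

lemma VS: "vector_space sc" using LS unfolding lie_superalgebra_def by blast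

interpretation V: vector_space sc by (rule VS)

lemma LSc: "(\<forall>x y z. br (x + y) z = br x z + br y z) \<and>
     (\<forall>x y z. br x (y + z) = br x y + br x z) \<and>
     (\<forall>c x y. br (sc c x) y = sc c (br x y)) \<and>
     (\<forall>c x y. br x (sc c y) = sc c (br x y)) \<and>
     (\<forall>a b x y. x \<in> grade L0 L1 a \<longrightarrow> y \<in> grade L0 L1 b \<longrightarrow>
        br x y = - sc (ssign a b) (br y x)) \<and>
     (\<forall>a b x y z. x \<in> grade L0 L1 a \<longrightarrow> y \<in> grade L0 L1 b \<longrightarrow>
        br x (br y z) = br (br x y) z + sc (ssign a b) (br y (br x z)))"
  using LS unfolding lie_superalgebra_def by (elim conjE) (intro conjI; assumption)

lemma br_addL: "br (x + y) z = br x z + br y z" using LSc by metis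
lemma br_addR: "br x (y + z) = br x y + br x z" using LSc by metis
lemma br_scL: "br (sc c x) y = sc c (br x y)" using LSc by metis
lemma br_scR: "br x (sc c y) = sc c (br x y)" using LSc by metis
lemma br_anti: "x \<in> grade L0 L1 a \<Longrightarrow> y \<in> grade L0 L1 b \<Longrightarrow> br x y = - sc (ssign a b) (br y x)"
  using LSc by blast
lemma jac: "x \<in> grade L0 L1 a \<Longrightarrow> y \<in> grade L0 L1 b \<Longrightarrow>
   br x (br y z) = br (br x y) z + sc (ssign a b) (br y (br x z))"
  using LSc by blast

lemma br_0L: "br 0 z = 0"
  using br_addL[of 0 0 z] by simp
lemma br_0R: "br z 0 = 0"
  using br_addR[of z 0 0] by simp
lemma br_negL: "br (- x) z = - br x z"
  using br_addL[of x "-x" z] br_0L by (simp add: eq_neg_iff_add_eq_0 add.commute)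
lemma br_negR: "br z (- x) = - br z x"
  using br_addR[of z x "-x"] br_0R by (simp add: eq_neg_iff_add_eq_0 add.commute)

lemma Cc: "module.subspace sc H \<and> H \<subseteq> L0 \<and>
     (\<forall>j. \<forall>h\<in>H. \<forall>h'\<in>H. \<alpha> j (h + h') = \<alpha> j h + \<alpha> j h') \<and>
     (\<forall>i. hh i \<in> H) \<and>
     (\<forall>i j. \<alpha> j (hh i) = A $ i $ j) \<and>
     (\<forall>i. X i \<in> grade L0 L1 (p i) \<and> Y i \<in> grade L0 L1 (p i)) \<and>
     (\<forall>i. \<forall>h\<in>H. br h (X i) = sc (\<alpha> i h) (X i)) \<and>
     (\<forall>i j. br (X i) (Y j) = (if i = j then hh i else 0))"
  using C unfolding contragredient_def by (elim conjE) (intro conjI; assumption)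

lemma hhH: "hh i \<in> H" using Cc by blast
lemma HL0: "H \<subseteq> L0" using Cc by (elim conjE) assumption
lemma hh_gr: "hh i \<in> grade L0 L1 False" using hhH HL0 by (auto simp: grade_def)
lemma X_gr: "X i \<in> grade L0 L1 (p i)" using Cc by blast
lemma Y_gr: "Y i \<in> grade L0 L1 (p i)" using Cc by blast
lemma brHX: "h \<in> H \<Longrightarrow> br h (X i) = sc (\<alpha> i h) (X i)" using Cc by blast
lemma alpha_hh: "\<alpha> j (hh i) = A $ i $ j" using Cc by blast
lemma XY: "br (X i) (Y j) = (if i = j then hh i else 0)" using Cc by (elim conjE) (erule allE)+
lemma alpha_add: "h \<in> H \<Longrightarrow> h' \<in> H \<Longrightarrow> \<alpha> j (h + h') = \<alpha> j h + \<alpha> j h'"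
  using Cc by blast
lemma zeroH: "0 \<in> H"
  using Cc by (meson V.subspace_0)
lemma alpha0: "\<alpha> j 0 = 0"
  using alpha_add[OF zeroH zeroH, of j] by simp

lemma X_nz: "X j \<noteq> 0"
proof
  assume "X j = 0"
  then have "hh j = 0" using XY[of j j] br_0L by simp
  then have "\<forall>k. A $ j $ k = 0" using alpha_hh alpha0 by metis
  then show False using elem unfolding elemental_def by blast
qed

definition vv where "vv i j m = (br (X i) ^^ m) (X j)"

lemma vv_Suc: "vv i j (Suc m) = br (X i) (vv i j m)" by (simp add: vv_def)
lemma vv_0: "vv i j 0 = X j" by (simp add: vv_def)

lemma wt: "br (hh i) (vv i j m) = sc (A$i$j + of_nat m * A$i$i) (vv i j m)"
proof (induction m)
  case 0
  then show ?case using brHX[OF hhH, of i j] alpha_hh by (simp add: vv_0)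
next
  case (Suc m)
  have "br (hh i) (vv i j (Suc m)) = br (br (hh i) (X i)) (vv i j m)
        + sc (ssign False (p i)) (br (X i) (br (hh i) (vv i j m)))"
    unfolding vv_Suc by (rule jac[OF hh_gr X_gr])
  also have "\<dots> = sc (A$i$i) (vv i j (Suc m)) + sc (A$i$j + of_nat m * A$i$i) (vv i j (Suc m))"
    using brHX[OF hhH, of i i] alpha_hh Suc
    by (simp add: ssign_def br_scL br_scR vv_Suc)
  also have "\<dots> = sc (A$i$j + of_nat (Suc m) * A$i$i) (vv i j (Suc m))"
    unfolding V.scale_left_distrib[symmetric] by (rule arg_cong[where f="\<lambda>c. sc c _"]) (simp add: algebra_simps)
  finally show ?case .
qed

lemma lower:
  assumes "i \<noteq> j"
  shows "br (Y i) (vv i j m) = sc (cf (ssign (p i) (p i)) (A$i$i) (A$i$j) m) (vv i j (m - 1))"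
proof (induction m)
  case 0
  have "br (Y i) (X j) = - sc (ssign (p i) (p j)) (br (X j) (Y i))"
    by (rule br_anti[OF Y_gr X_gr])
  then show ?case using assms XY[of j i] br_0L by (simp add: vv_0 cf.simps)
next
  case (Suc m)
  define s where "s = ssign (p i) (p i)"
  define w where "w = vv i j m"
  have fe: "br (Y i) (X i) = - sc s (hh i)"
    using br_anti[OF Y_gr X_gr, of i i] XY[of i i] by (simp add: s_def)
  have t2: "sc (cf s (A$i$i) (A$i$j) m) (br (X i) (vv i j (m - 1))) = sc (cf s (A$i$i) (A$i$j) m) w"
    by (cases m) (simp_all add: w_def vv_Suc cf.simps)
  have i1: "br (X i) (br (Y i) w) = sc (cf s (A$i$i) (A$i$j) m) w"
    unfolding w_def Suc s_def[symmetric] br_scR t2[unfolded w_def] ..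
  have i2: "br (br (Y i) (X i)) w = sc (- (s * (A$i$j + of_nat m * A$i$i))) w"
    unfolding fe br_negL br_scL w_def wt by simp
  have "br (Y i) (vv i j (Suc m)) = br (br (Y i) (X i)) w + sc s (br (X i) (br (Y i) w))"
    unfolding vv_Suc w_def s_def by (rule jac[OF Y_gr X_gr])
  also have "\<dots> = sc (- (s * (A$i$j + of_nat m * A$i$i))) w + sc s (sc (cf s (A$i$i) (A$i$j) m) w)"
    by (simp only: i1 i2)
  also have "\<dots> = sc (cf s (A$i$i) (A$i$j) (Suc m)) w"
    unfolding V.scale_left_distrib[symmetric] V.scale_scale by (rule arg_cong[where f="\<lambda>c. sc c _"]) (simp add: algebra_simps cf.simps)
  finally show ?case by (simp add: w_def s_def)
qed


lemma vv_after: assumes "vv i j M = 0" "M \<le> m" shows "vv i j m = 0"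
  using assms(2)
proof (induction m rule: dec_induct)
  case base then show ?case using assms(1) by simp
next
  case (step m) then show ?case by (simp add: vv_Suc br_0R)
qed

lemma descent:
  assumes ij: "i \<noteq> j" and M: "vv i j M = 0"
    and nz: "\<And>m. k < m \<Longrightarrow> m \<le> M \<Longrightarrow> cf (ssign (p i) (p i)) (A$i$i) (A$i$j) m \<noteq> 0"
  shows "vv i j k = 0"
proof (cases "M \<le> k")
  case True then show ?thesis using vv_after[OF M] by blast
next
  case False
  have "\<forall>d. d \<le> M - k \<longrightarrow> vv i j (M - d) = 0"
  proof (intro allI)
    fix d show "d \<le> M - k \<longrightarrow> vv i j (M - d) = 0"
    proof (induction d)
      case 0 then show ?case using M by simp
    next
      case (Suc d)
      show ?case
      proof
        assume d: "Suc d \<le> M - k"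
        define m where "m = M - d"
        have km: "k < m" "m \<le> M" using d by (auto simp: m_def)
        have "vv i j m = 0" using Suc d by (simp add: m_def)
        then have "sc (cf (ssign (p i) (p i)) (A$i$i) (A$i$j) m) (vv i j (m - 1)) = 0"
          using lower[OF ij, of m] br_0R by simp
        then have "vv i j (m - 1) = 0" using nz[OF km] by simp
        moreover have "m - 1 = M - Suc d" using d by (simp add: m_def)
        ultimately show "vv i j (M - Suc d) = 0" by simp
      qed
    qed
  qed
  then have "vv i j (M - (M - k)) = 0" by blast
  then show ?thesis using False by simp
qed

lemma exists_cf0:
  assumes ij: "i \<noteq> j" and M: "vv i j M = 0"
  shows "\<exists>m\<ge>1. cf (ssign (p i) (p i)) (A$i$i) (A$i$j) m = 0"
proof (rule ccontr)
  assume "\<not> ?thesis"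
  then have "vv i j 0 = 0" by (intro descent[OF ij M]) auto
  then show False using X_nz by (simp add: vv_0)
qed

lemma ssign_nz: "ssign a b \<noteq> 0" by (simp add: ssign_def)

lemma cf_nz2:
  assumes "a \<noteq> 0" and "2 \<le> m" and "s = 1 \<or> s = -1"
  shows "cf s a 0 m \<noteq> 0"
  using assms(3)
proof
  assume s: "s = 1"
  have "2 * cf 1 a 0 m = - (of_nat m * (of_nat m - 1) * a)" using cf_even[of a 0 m] by simp
  moreover have "(of_nat m :: complex) \<noteq> 0" "(of_nat m :: complex) - 1 \<noteq> 0" using assms(2) by auto
  ultimately show ?thesis using s assms(1) by auto
next
  assume s: "s = -1"
  obtain k r where kr: "m = 2*k + r" "r < 2" by (intro that[of "m div 2" "m mod 2"]) auto
  then have k: "k \<ge> 1" using assms(2) by auto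
  have kz: "(of_nat k :: complex) \<noteq> 0" using k by auto
  have "r = 0 \<or> r = 1" using kr by auto
  then show ?thesis
  proof
    assume "r = 0"
    then have "m = 2*k" using kr by simp
    then show ?thesis using cf_ev[of a 0 k] s kz assms(1) by simp
  next
    assume "r = 1"
    then have "m = 2*k+1" using kr by simp
    then show ?thesis using cf_odd[of a 0 k] s kz assms(1) by simp
  qed
qed

lemma C4core:
  assumes ij: "i \<noteq> j" and M: "vv i j M = 0" and a0: "A$i$j = 0" and aii: "A$i$i \<noteq> 0"
  shows "A$j$i = 0"
proof -
  have ss: "ssign (p i) (p i) = 1 \<or> ssign (p i) (p i) = -1" by (rule ssign_cases)
  have "vv i j 1 = 0"
    by (rule descent[OF ij M]) (use cf_nz2[OF aii _ ss] a0 in auto)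
  then have xx: "br (X i) (X j) = 0" by (simp add: vv_def)
  have yx: "br (Y j) (X i) = 0"
    using br_anti[OF Y_gr X_gr, of j i] XY[of i j] ij by simp
  have yxj: "br (Y j) (X j) = - sc (ssign (p j) (p j)) (hh j)"
    using br_anti[OF Y_gr X_gr, of j j] XY[of j j] by simp
  have xh: "br (X i) (hh j) = - sc (A$j$i) (X i)"
    using br_anti[OF X_gr hh_gr, of i j] brHX[OF hhH, of j i] alpha_hh by (simp add: ssign_def)
  have "br (Y j) (br (X i) (X j)) = br (br (Y j) (X i)) (X j)
        + sc (ssign (p j) (p i)) (br (X i) (br (Y j) (X j)))"
    by (rule jac[OF Y_gr X_gr])
  then have "0 = sc (ssign (p j) (p i) * (ssign (p j) (p j) * A$j$i)) (X i)"
    using xx yx yxj xh br_0L br_0R by (simp add: br_negR br_scR)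
  then show ?thesis using X_nz ssign_nz by (metis V.scale_eq_0_iff mult_eq_0_iff)
qed


lemma main:
  assumes integ: "lie_integrable br X"
  shows "\<exists>c :: 'n \<Rightarrow> complex. (\<forall>i. c i \<noteq> 0) \<and> conditions_C (row_scale c A) p"
proof -
  have MM: "\<And>i j. \<exists>M. vv i j M = 0" using integ unfolding lie_integrable_def vv_def by blast
  define c where "c i = (if A$i$i = 0 then 1 else 2 / A$i$i)" for i
  have cnz: "\<forall>i. c i \<noteq> 0" by (simp add: c_def)
  define B where "B = row_scale c A"
  have Bij: "\<And>i j. B$i$j = c i * A$i$j" by (simp add: B_def row_scale_def)
  have Bii: "\<And>i. B$i$i = (if A$i$i = 0 then 0 else 2)" by (simp add: Bij c_def)
  have sp: "\<And>i. ssign (p i) (p i) = (if p i then -1 else 1)" by (simp add: ssign_def)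
  have C1: "\<forall>i. B$i$i = 0 \<or> B$i$i = 2" using Bii by simp
  have C2: "\<forall>i. B$i$i = 0 \<longrightarrow> p i"
  proof (intro allI impI)
    fix i assume "B$i$i = 0"
    then have a0: "A$i$i = 0" using Bii by (simp split: if_splits)
    show "p i"
    proof (rule ccontr)
      assume np: "\<not> p i"
      obtain j where j: "A$i$j \<noteq> 0" using elem unfolding elemental_def by blast
      then have ij: "i \<noteq> j" using a0 by auto
      obtain M where "vv i j M = 0" using MM by blast
      then obtain m where m: "m \<ge> 1" "cf (ssign (p i) (p i)) (A$i$i) (A$i$j) m = 0"
        using exists_cf0[OF ij] by blast
      then have "2 * cf 1 (A$i$i) (A$i$j) m = 0" using np by (simp add: ssign_def)
      then have "2 * of_nat m * A$i$j = 0" using cf_even[of "A$i$i" "A$i$j" m] a0 by simp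
      then show False using m(1) j by simp
    qed
  qed
  have C3: "\<forall>i j. B$i$i = 2 \<longrightarrow> j \<noteq> i \<longrightarrow>
        (\<exists>k::int. k \<le> 0 \<and> B$i$j = (if p i then 2 else 1) * of_int k)"
  proof (intro allI impI)
    fix i j assume b2: "B$i$i = 2" and ji: "j \<noteq> i"
    then have a: "A$i$i \<noteq> 0" using Bii by (simp split: if_splits)
    have Bij': "B$i$j = 2 * A$i$j / A$i$i" using Bij a by (simp add: c_def)
    obtain M where "vv i j M = 0" using MM by blast
    then obtain m where m: "m \<ge> 1" "cf (ssign (p i) (p i)) (A$i$i) (A$i$j) m = 0"
      using exists_cf0 ji by metis
    show "\<exists>k::int. k \<le> 0 \<and> B$i$j = (if p i then 2 else 1) * of_int k"
    proof (cases "p i")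
      case False
      then have "2 * cf 1 (A$i$i) (A$i$j) m = 0" using m by (simp add: ssign_def)
      then have "of_nat m * (2 * A$i$j + (of_nat m - 1) * A$i$i) = 0"
        using cf_even[of "A$i$i" "A$i$j" m] by (simp add: algebra_simps)
      then have "2 * A$i$j = - ((of_nat m - 1) * A$i$i)" using m(1)
        by (simp add: eq_neg_iff_add_eq_0)
      then have "B$i$j = - (of_nat m - 1)" using a Bij' by simp
      then have "B$i$j = of_int (1 - int m)" by simp
      then show ?thesis using False m(1) by (intro exI[of _ "1 - int m"]) auto
    next
      case True
      then have cf0: "cf (-1) (A$i$i) (A$i$j) m = 0" using m by (simp add: ssign_def)
      obtain k r where kr: "m = 2*k + r" "r < 2" by (intro that[of "m div 2" "m mod 2"]) auto
      show ?thesis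
      proof (cases "r = 0")
        case True
        then have mk: "m = 2*k" using kr by simp
        then have "of_nat k * A$i$i = 0" using cf_ev[of "A$i$i" "A$i$j" k] cf0 by simp
        moreover have "k \<ge> 1" using mk m(1) by simp
        ultimately show ?thesis using a by simp
      next
        case False
        then have mk: "m = 2*k+1" using kr by simp
        have "A$i$j + of_nat k * A$i$i = 0" using cf_odd[of "A$i$i" "A$i$j" k] cf0 unfolding mk by simp
        then have "A$i$j = - (of_nat k * A$i$i)" by (simp add: eq_neg_iff_add_eq_0)
        then have "B$i$j = 2 * of_int (- int k)" using Bij' a by simp
        then show ?thesis using \<open>p i\<close> by (intro exI[of _ "- int k"]) auto
      qed
    qed
  qed
  have C4: "\<forall>i j. B$i$j = 0 \<longrightarrow> B$j$i \<noteq> 0 \<longrightarrow> B$i$i = 0"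
  proof (intro allI impI)
    fix i j assume b1: "B$i$j = 0" and b2: "B$j$i \<noteq> 0"
    then have a1: "A$i$j = 0" and a2: "A$j$i \<noteq> 0" using Bij cnz by auto
    then have ij: "i \<noteq> j" by auto
    obtain M where M: "vv i j M = 0" using MM by blast
    have "A$i$i = 0" using C4core[OF ij M a1] a2 by blast
    then show "B$i$i = 0" using Bii by simp
  qed
  show ?thesis
  proof (intro exI[of _ c] conjI)
    show "\<forall>i. c i \<noteq> 0" by (rule cnz)
    show "conditions_C (row_scale c A) p" unfolding conditions_C_def B_def[symmetric]
      by (rule conjI[OF C1 conjI[OF C2 conjI[OF C3 C4]]])
  qed
qed
end

theorem lemma3p1:
  fixes A :: "complex^'n^'n" and p :: "'n \<Rightarrow> bool"
    and sc :: "complex \<Rightarrow> 'v::ab_group_add \<Rightarrow> 'v" and br :: "'v \<Rightarrow> 'v \<Rightarrow> 'v"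
    and L0 L1 H :: "'v set" and \<alpha> :: "'n \<Rightarrow> 'v \<Rightarrow> complex"
    and hh X Y :: "'n \<Rightarrow> 'v"
  assumes "contragredient A p sc br L0 L1 H \<alpha> hh X Y"
    and "lie_integrable br X"
    and "elemental A"
    and "indecomposable A"
    and "CARD('n) \<ge> 2"
  shows "\<exists>c :: 'n \<Rightarrow> complex. (\<forall>i. c i \<noteq> 0) \<and> conditions_C (row_scale c A) p"
proof -
  interpret cg A p sc br L0 L1 H \<alpha> hh X Y using assms(1,3) by unfold_locales
  show ?thesis using main[OF assms(2)] .
qed

end
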